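(* If $G$ is a graph of order $n$ with diameter $d$ and a resolving set of size $k$, then $n\leq (dk+1)^{dvc^*(G)}+1$.
   Context: A set $R$ of vertices of a graph $G$ is a resolving set if for each pair $u,v$ of distinct vertices there is $x\in R$ with $d(x,u)\neq d(x,v)$. The distance hypergraph $\mathcal{H}(G)$ has vertex set $V(G)$ and, as hyperedges, all balls $B(v,r)=\{u:d(u,v)\leq r\}$ for $v\in V(G)$ and integers $r\geq0$. For a hypergraph, a vertex set $X$ is shattered if every subset of $X$ equals $e\cap X$ for some hyperedge $e$; the VC dimension is the maximum size of a shattered set. The dual hypergraph has the hyperedges as vertices and, for each original vertex $v$, the hyperedge consisting of the original hyperedges containing $v$. The dual distance-VC dimension $dvc^*(G)$ is the VC dimension of the dual of $\mathcal{H}(G)$. *)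

theory Defs
  imports Main
begin

definition simple_graph :: "'a set \<Rightarrow> ('a \<Rightarrow> 'a \<Rightarrow> bool) \<Rightarrow> bool" where
  "simple_graph V E \<longleftrightarrow> finite V \<and> (\<forall>u v. E u v \<longrightarrow> u \<in> V \<and> v \<in> V)
     \<and> (\<forall>u v. E u v \<longrightarrow> E v u) \<and> (\<forall>v. \<not> E v v)"

definition walk_len :: "'a set \<Rightarrow> ('a \<Rightarrow> 'a \<Rightarrow> bool) \<Rightarrow> 'a \<Rightarrow> 'a \<Rightarrow> nat \<Rightarrow> bool" where
  "walk_len V E u v n \<longleftrightarrow> (\<exists>p. length p = Suc n \<and> hd p = u \<and> last p = v \<and> set p \<subseteq> V
      \<and> (\<forall>i < n. E (p ! i) (p ! Suc i)))"

definition connected_graph :: "'a set \<Rightarrow> ('a \<Rightarrow> 'a \<Rightarrow> bool) \<Rightarrow> bool" where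
  "connected_graph V E \<longleftrightarrow> (\<forall>u\<in>V. \<forall>v\<in>V. \<exists>n. walk_len V E u v n)"

definition gdist :: "'a set \<Rightarrow> ('a \<Rightarrow> 'a \<Rightarrow> bool) \<Rightarrow> 'a \<Rightarrow> 'a \<Rightarrow> nat" where
  "gdist V E u v = (LEAST n. walk_len V E u v n)"

definition diameter :: "'a set \<Rightarrow> ('a \<Rightarrow> 'a \<Rightarrow> bool) \<Rightarrow> nat" where
  "diameter V E = Max {gdist V E u v | u v. u \<in> V \<and> v \<in> V}"

definition resolving_set :: "'a set \<Rightarrow> ('a \<Rightarrow> 'a \<Rightarrow> bool) \<Rightarrow> 'a set \<Rightarrow> bool" where
  "resolving_set V E R \<longleftrightarrow> R \<subseteq> V \<and>
     (\<forall>u\<in>V. \<forall>v\<in>V. u \<noteq> v \<longrightarrow> (\<exists>x\<in>R. gdist V E x u \<noteq> gdist V E x v))"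

definition ball :: "'a set \<Rightarrow> ('a \<Rightarrow> 'a \<Rightarrow> bool) \<Rightarrow> 'a \<Rightarrow> nat \<Rightarrow> 'a set" where
  "ball V E v r = {u \<in> V. gdist V E u v \<le> r}"

text \<open>Hyperedges of the distance hypergraph H(G) (a hypergraph as a set of hyperedges).\<close>
definition distance_hyperedges :: "'a set \<Rightarrow> ('a \<Rightarrow> 'a \<Rightarrow> bool) \<Rightarrow> 'a set set" where
  "distance_hyperedges V E = {ball V E v r | v r. v \<in> V}"

definition shattered :: "'b set set \<Rightarrow> 'b set \<Rightarrow> bool" where
  "shattered F X \<longleftrightarrow> (\<forall>Y \<subseteq> X. \<exists>e\<in>F. e \<inter> X = Y)"

definition vc_dim :: "'b set \<Rightarrow> 'b set set \<Rightarrow> nat" where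
  "vc_dim W F = Max {card X | X. X \<subseteq> W \<and> shattered F X}"

text \<open>Dual hypergraph: vertices are the hyperedges, and each original vertex v gives
  the hyperedge of all original hyperedges containing v.\<close>
definition dual_hyperedges :: "'a set \<Rightarrow> 'a set set \<Rightarrow> 'a set set set" where
  "dual_hyperedges W F = {{e \<in> F. v \<in> e} | v. v \<in> W}"

definition dvc_star :: "'a set \<Rightarrow> ('a \<Rightarrow> 'a \<Rightarrow> bool) \<Rightarrow> nat" where
  "dvc_star V E = vc_dim (distance_hyperedges V E) (dual_hyperedges V (distance_hyperedges V E))"

end

theory Submission
  imports Defs
begin

lemma sauer_pow:
  assumes "finite X"
  shows "\<forall>T D. T \<subseteq> Pow X \<longrightarrow> (\<forall>Y\<subseteq>X. shattered T Y \<longrightarrow> card Y \<le> D)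
           \<longrightarrow> card T \<le> (card X + 1) ^ D"
  using assms
proof (induction X rule: finite_induct)
  case empty
  show ?case
  proof (intro allI impI)
    fix T :: "'a set set" and D :: nat
    assume "T \<subseteq> Pow {}"
    hence "T \<subseteq> {{}}" by auto
    hence "card T \<le> card {{}::'a set}" by (intro card_mono) auto
    thus "card T \<le> (card {} + 1) ^ D" by simp
  qed
next
  case (insert x X)
  show ?case
  proof (intro allI impI)
    fix T :: "'a set set" and D :: nat
    assume TP: "T \<subseteq> Pow (insert x X)"
      and sh: "\<forall>Y\<subseteq>insert x X. shattered T Y \<longrightarrow> card Y \<le> D"
    have finT: "finite T" using TP insert(1) finite_subset by (metis finite_Pow_iff finite_insert)
    define A where "A = {t\<in>T. x \<notin> t}"
    define B where "B = {t\<in>T. x \<in> t}"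
    define B' where "B' = (\<lambda>t. t - {x}) ` B"
    have finA: "finite A" using finT A_def by auto
    have finB: "finite B" using finT B_def by auto
    have finB': "finite B'" using finB B'_def by auto
    have "T = A \<union> B" using A_def B_def by auto
    hence c1: "card T \<le> card A + card B" using card_Un_le by metis
    have "inj_on (\<lambda>t. t - {x}) B" unfolding B_def inj_on_def by blast
    hence c2: "card B' = card B" unfolding B'_def by (simp add: card_image)
    have c3: "card A + card B' = card (A \<union> B') + card (A \<inter> B')"
      using card_Un_Int[OF finA finB'] .
    define T0 where "T0 = A \<union> B'"
    define T1 where "T1 = A \<inter> B'"
    have T0P: "T0 \<subseteq> Pow X" using TP unfolding T0_def A_def B'_def B_def by auto
    have T1P: "T1 \<subseteq> Pow X" using T0P unfolding T0_def T1_def by auto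
    have T0sh: "\<forall>Y\<subseteq>X. shattered T0 Y \<longrightarrow> card Y \<le> D"
    proof (intro allI impI)
      fix Y assume Y: "Y \<subseteq> X" "shattered T0 Y"
      have "shattered T Y"
        unfolding shattered_def
      proof (intro allI impI)
        fix Z assume "Z \<subseteq> Y"
        then obtain e where e: "e \<in> T0" "e \<inter> Y = Z" using Y(2) unfolding shattered_def by blast
        from e(1) obtain t where t: "t \<in> T" "e = t - {x}"
          unfolding T0_def A_def B'_def B_def by auto
        have "x \<notin> Y" using Y(1) insert(2) by auto
        hence "t \<inter> Y = Z" using t e(2) by auto
        thus "\<exists>e\<in>T. e \<inter> Y = Z" using t(1) by blast
      qed
      thus "card Y \<le> D" using sh Y(1) by auto
    qed
    have T1sh: "\<And>Y. Y \<subseteq> X \<Longrightarrow> shattered T1 Y \<Longrightarrow> card Y + 1 \<le> D"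
    proof -
      fix Y assume Y: "Y \<subseteq> X" "shattered T1 Y"
      have xY: "x \<notin> Y" using Y(1) insert(2) by auto
      have "shattered T (insert x Y)"
        unfolding shattered_def
      proof (intro allI impI)
        fix Z assume Z: "Z \<subseteq> insert x Y"
        then obtain s where s: "s \<in> T1" "s \<inter> Y = Z - {x}" using Y(2) unfolding shattered_def
          by (metis Diff_subset_conv insert_is_Un)
        have sT: "s \<in> T" "x \<notin> s" using s(1) unfolding T1_def A_def by auto
        have "s \<in> B'" using s(1) unfolding T1_def by auto
        then obtain b where b: "b \<in> B" "s = b - {x}" unfolding B'_def by auto
        have ixT: "b \<in> T" "x \<in> b" using b unfolding B_def by auto
        hence ixT': "insert x s \<in> T" using b by (metis insert_Diff)
        show "\<exists>e\<in>T. e \<inter> insert x Y = Z"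
        proof (cases "x \<in> Z")
          case True
          have "insert x s \<inter> insert x Y = Z" using s(2) True Z xY by auto
          thus ?thesis using ixT' by blast
        next
          case False
          have "s \<inter> insert x Y = Z" using s(2) False Z xY sT(2) by auto
          thus ?thesis using sT(1) by blast
        qed
      qed
      note shx = this
      have sub: "insert x Y \<subseteq> insert x X" using Y(1) by auto
      have cx: "card (insert x Y) \<le> D" using sh sub shx by blast
      have fY: "finite Y" using Y(1) insert(1) finite_subset by auto
      show "card Y + 1 \<le> D" using cx fY xY by (simp add: card_insert_if)
    qed
    have b0: "card T0 \<le> (card X + 1) ^ D" using insert.IH T0P T0sh by blast
    have cT: "card T \<le> card T0 + card T1" using c1 c2 c3 T0_def T1_def by simp
    show "card T \<le> (card (insert x X) + 1) ^ D"
    proof (cases "D = 0")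
      case True
      have "T1 = {}"
      proof (rule ccontr)
        assume "T1 \<noteq> {}"
        hence "shattered T1 {}" unfolding shattered_def by auto
        thus False using T1sh True by fastforce
      qed
      thus ?thesis using cT b0 True by simp
    next
      case False
      then obtain D' where D': "D = Suc D'" by (cases D) auto
      have "\<forall>Y\<subseteq>X. shattered T1 Y \<longrightarrow> card Y \<le> D'" using T1sh D' by fastforce
      hence b1: "card T1 \<le> (card X + 1) ^ D'" using insert.IH T1P by blast
      have "(card X + 1) ^ D + (card X + 1) ^ D' = (card X + 2) * (card X + 1) ^ D'"
        using D' by simp
      also have "\<dots> \<le> (card X + 2) * (card X + 2) ^ D'"
        by (intro mult_left_mono power_mono) auto
      also have "\<dots> = (card (insert x X) + 1) ^ D" using D' insert(1,2) by simp
      finally show ?thesis using cT b0 b1 by linarith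
    qed
  qed
qed

lemma walk_rev:
  assumes sym: "\<And>a b. E a b \<Longrightarrow> E b a" and w: "walk_len V E u v n"
  shows "walk_len V E v u n"
proof -
  obtain p where p: "length p = Suc n" "hd p = u" "last p = v" "set p \<subseteq> V"
    "\<forall>i < n. E (p ! i) (p ! Suc i)" using w unfolding walk_len_def by blast
  have ne: "p \<noteq> []" using p(1) by auto
  have "\<forall>i<n. E (rev p ! i) (rev p ! Suc i)"
  proof (intro allI impI)
    fix i assume i: "i < n"
    have 1: "rev p ! i = p ! (n - i)" using p(1) i by (simp add: rev_nth)
    have 2: "rev p ! Suc i = p ! (n - Suc i)" using p(1) i by (simp add: rev_nth)
    have "E (p ! (n - Suc i)) (p ! Suc (n - Suc i))" using p(5) i by auto
    moreover have "Suc (n - Suc i) = n - i" using i by auto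
    ultimately show "E (rev p ! i) (rev p ! Suc i)" using 1 2 sym by metis
  qed
  moreover have "hd (rev p) = v" using ne p(3) by (simp add: hd_rev)
  moreover have "last (rev p) = u" using ne p(2) by (simp add: last_rev)
  ultimately show ?thesis unfolding walk_len_def using p(1,4)
    by (metis length_rev set_rev)
qed

lemma gdist_sym:
  assumes "simple_graph V E"
  shows "gdist V E u v = gdist V E v u"
proof -
  have sym: "\<And>a b. E a b \<Longrightarrow> E b a" using assms unfolding simple_graph_def by blast
  have "\<And>n. walk_len V E u v n = walk_len V E v u n"
    using walk_rev[of E V, OF sym] by blast
  hence "walk_len V E u v = walk_len V E v u" by (rule ext)
  thus ?thesis unfolding gdist_def by simp
qed

theorem proposition4:
  fixes V :: "'a set" and E :: "'a \<Rightarrow> 'a \<Rightarrow> bool" and R :: "'a set" and n d k :: nat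
  assumes "simple_graph V E" and "V \<noteq> {}" and "connected_graph V E"
    and "card V = n" and "diameter V E = d"
    and "resolving_set V E R" and "card R = k"
  shows "n \<le> (d * k + 1) ^ dvc_star V E + 1"
proof -
  have finV: "finite V" using assms(1) unfolding simple_graph_def by blast
  have RV: "R \<subseteq> V" using assms(6) unfolding resolving_set_def by blast
  have finR: "finite R" using RV finV finite_subset by auto
  define W where "W = distance_hyperedges V E"
  define F where "F = dual_hyperedges V W"
  define D where "D = dvc_star V E"
  have WP: "W \<subseteq> Pow V" unfolding W_def distance_hyperedges_def ball_def by auto
  have finW: "finite W" using WP finV by (meson finite_Pow_iff finite_subset)
  define S where "S = (\<lambda>(x, r). ball V E x r) ` (R \<times> {..<d})"
  have SW: "S \<subseteq> W" unfolding S_def W_def distance_hyperedges_def using RV by auto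
  have cS: "card S \<le> d * k"
  proof -
    have "card S \<le> card (R \<times> {..<d})" unfolding S_def
      using finR by (intro card_image_le) auto
    also have "\<dots> = k * d" using assms(7) by (simp add: card_cartesian_product)
    finally show ?thesis by (simp add: mult.commute)
  qed
  define T where "T = (\<lambda>f. f \<inter> S) ` F"
  have TP: "T \<subseteq> Pow S" unfolding T_def by auto
  have finS: "finite S" using SW finW finite_subset by auto
  have fin_sh: "finite {card X | X. X \<subseteq> W \<and> shattered F X}"
  proof -
    have "{card X | X. X \<subseteq> W \<and> shattered F X} \<subseteq> card ` Pow W" by auto
    thus ?thesis using finW by (meson finite_Pow_iff finite_imageI finite_subset)
  qed
  have Tsh: "\<forall>Y\<subseteq>S. shattered T Y \<longrightarrow> card Y \<le> D"
  proof (intro allI impI)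
    fix Y assume Y: "Y \<subseteq> S" "shattered T Y"
    have "shattered F Y" unfolding shattered_def
    proof (intro allI impI)
      fix Z assume "Z \<subseteq> Y"
      then obtain t where t: "t \<in> T" "t \<inter> Y = Z" using Y(2) unfolding shattered_def by blast
      then obtain f where f: "f \<in> F" "t = f \<inter> S" unfolding T_def by auto
      have "f \<inter> Y = Z" using f(2) t(2) Y(1) by auto
      thus "\<exists>e\<in>F. e \<inter> Y = Z" using f(1) by blast
    qed
    hence "card Y \<in> {card X | X. X \<subseteq> W \<and> shattered F X}" using Y(1) SW by blast
    hence "card Y \<le> vc_dim W F" unfolding vc_dim_def using fin_sh by (simp add: Max_ge)
    thus "card Y \<le> D" unfolding D_def dvc_star_def F_def W_def by simp
  qed
  have bT: "card T \<le> (card S + 1) ^ D" using sauer_pow[OF finS] TP Tsh by blast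
  have finT: "finite T" using TP finS by (meson finite_Pow_iff finite_subset)
  define g where "g = (\<lambda>v. {e \<in> W. v \<in> e} \<inter> S)"
  have gT: "g ` V \<subseteq> T" unfolding g_def T_def F_def dual_hyperedges_def by auto
  have fin_dist: "finite {gdist V E u v | u v. u \<in> V \<and> v \<in> V}"
  proof -
    have "{gdist V E u v | u v. u \<in> V \<and> v \<in> V} = (\<lambda>(u,v). gdist V E u v) ` (V \<times> V)" by auto
    thus ?thesis using finV by simp
  qed
  have dle: "\<And>u v. u \<in> V \<Longrightarrow> v \<in> V \<Longrightarrow> gdist V E u v \<le> d"
  proof -
    fix u v assume "u \<in> V" "v \<in> V"
    hence "gdist V E u v \<in> {gdist V E u v | u v. u \<in> V \<and> v \<in> V}" by blast
    hence "gdist V E u v \<le> Max {gdist V E u v | u v. u \<in> V \<and> v \<in> V}"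
      using fin_dist by (rule Max_ge[rotated])
    thus "gdist V E u v \<le> d" using assms(5) unfolding diameter_def by simp
  qed
  have sep: "\<And>u v. u \<in> V \<Longrightarrow> v \<in> V \<Longrightarrow> gdist V E x u < gdist V E x v \<Longrightarrow> x \<in> R \<Longrightarrow> g u \<noteq> g v" for x
  proof -
    fix u v assume uv: "u \<in> V" "v \<in> V" "gdist V E x u < gdist V E x v" "x \<in> R"
    define r where "r = gdist V E x u"
    have "r < d" using dle[of x v] uv RV r_def by auto
    hence bS: "ball V E x r \<in> S" unfolding S_def using uv(4) by force
    have bW: "ball V E x r \<in> W" using bS SW by auto
    have "u \<in> ball V E x r" unfolding ball_def r_def using uv(1) gdist_sym[OF assms(1)] by simp
    moreover have "v \<notin> ball V E x r" unfolding ball_def r_def using uv(3) gdist_sym[OF assms(1), of v x] by simp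
    ultimately have "ball V E x r \<in> g u" "ball V E x r \<notin> g v" unfolding g_def using bS bW by auto
    thus "g u \<noteq> g v" by blast
  qed
  have "inj_on g V"
  proof (rule inj_onI)
    fix u v assume uv: "u \<in> V" "v \<in> V" "g u = g v"
    show "u = v"
    proof (rule ccontr)
      assume "u \<noteq> v"
      then obtain x where x: "x \<in> R" "gdist V E x u \<noteq> gdist V E x v"
        using assms(6) uv unfolding resolving_set_def by blast
      show False
      proof (cases "gdist V E x u < gdist V E x v")
        case True thus False using sep[OF uv(1,2) True x(1)] uv(3) by blast
      next
        case False
        hence "gdist V E x v < gdist V E x u" using x(2) by linarith
        thus False using sep[OF uv(2,1) _ x(1)] uv(3) by metis
      qed
    qed
  qed
  hence "card V \<le> card T" using gT finT by (metis card_image card_mono)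
  also have "\<dots> \<le> (card S + 1) ^ D" by (rule bT)
  also have "\<dots> \<le> (d * k + 1) ^ D" using cS by (intro power_mono) auto
  finally show ?thesis using assms(4) D_def by simp
qed

end
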